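(* Consider the system \[ \begin{aligned} \dot X_1^1&=\bigl(\mu_1(S_1^{in}-k_1X_1^1)-D_1\bigr)X_1^1,\quad \dot X_2^1=\bigl(\mu_2(S_2^{in}+k_2X_1^1-k_3X_2^1)-D_1\bigr)X_2^1,\\ \dot X_1^2&=D_2(X_1^1-X_1^2)+\mu_1(S_1^{in}-k_1X_1^2)X_1^2,\quad \dot X_2^2=D_2(X_2^1-X_2^2)+\mu_2(S_2^{in}+k_2X_1^2-k_3X_2^2)X_2^2, \end{aligned} \] with $\mu_1,\mu_2$ satisfying (H1), (H2), and assume the existence conditions of the respective steady state types hold. Then: \begin{itemize} \item The steady states of the types $\mathcal E_{00}^{kl}$, $\mathcal E_{10}^{1l}$ ($k=0,1$, $l=0,1,2$) and $\mathcal E_{01}^{01}$ are unique. \item There exists at least one steady state of the type $\mathcal E_{02}^{01}$; generically, the system has an odd number of steady states of the type $\mathcal E_{02}^{01}$. \item For $i=1,2$: if $X_2^{1*}>x_2^m$, the steady states of the types $\mathcal E_{0i}^{11}$ and $\mathcal E_{1i}^{11}$ are unique; if $X_2^{1*}<x_2^m$, there exists at least one steady state of the type $\mathcal E_{0i}^{11}$ and of the type $\mathcal E_{1i}^{11}$, and generically the system has an odd number of steady states of each of these types. Here $X_2^{1*}$ and $X_1^{2*}$ are the $X_2^1$- and $X_1^2$-components of the steady state considered and $x_2^m=(S_2^{in}+k_2X_1^{2*}-S_2^m)/k_3$. \end{itemize}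
   Context: Parameters $k_1,k_2,k_3>0$, $D>0$, $r\in(0,1)$, $r_1=r$, $r_2=1-r$, $D_1=D/r_1$, $D_2=D/r_2$, $S_1^{in},S_2^{in}\ge0$. (H1): $\mu_1\in C^1(\mathbb R_+)$, $\mu_1(0)=0$, $\mu_1(+\infty)=m_1$, $\mu_1'>0$ on $(0,\infty)$. (H2): $\mu_2\in C^1(\mathbb R_+)$, $\mu_2(0)=0$, $\mu_2(+\infty)=0$, and there is $S_2^m>0$ with $\mu_2'>0$ on $(0,S_2^m)$, $\mu_2'<0$ on $(S_2^m,\infty)$. For $i=1,2$: $\lambda_1^i$ solves $\mu_1(S)=D_i$ ($+\infty$ if $D\ge r_im_1$); $\lambda_2^{i1}\le\lambda_2^{i2}$ solve $\mu_2(S)=D_i$ ($+\infty$ if $D>r_i\mu_2(S_2^m)$); $F_{ij}=\lambda_1^i+\frac{k_1}{k_2}(\lambda_2^{ij}-S_2^{in})$. Steady state types (for $i=1,2$) with existence conditions: $\mathcal E_{00}^{00}=(0,0,0,0)$ (always); $\mathcal E_{00}^{0i}=(0,0,0,(S_2^{in}-\lambda_2^{2i})/k_3)$ ($S_2^{in}>\lambda_2^{2i}$); $\mathcal E_{00}^{10}=(0,0,(S_1^{in}-\lambda_1^2)/k_1,0)$ ($S_1^{in}>\lambda_1^2$); $\mathcal E_{00}^{1i}=(0,0,(S_1^{in}-\lambda_1^2)/k_1,k_2(S_1^{in}-F_{2i})/(k_1k_3))$ ($S_1^{in}>\max(\lambda_1^2,F_{2i})$); $\mathcal E_{10}^{10}=((S_1^{in}-\lambda_1^1)/k_1,0,X_1^{2*},0)$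 and $\mathcal E_{10}^{1i}=((S_1^{in}-\lambda_1^1)/k_1,0,X_1^{2*},(S_2^{in}+k_2X_1^{2*}-\lambda_2^{2i})/k_3)$, where $X_1^{2*}$ solves $\mu_1(S_1^{in}-k_1x)=D_2(x-X_1^{1*})/x$ with $X_1^{1*}=(S_1^{in}-\lambda_1^1)/k_1$ (exist iff $S_1^{in}>\lambda_1^1$, resp. additionally $S_2^{in}+k_2X_1^{2*}>\lambda_2^{2i}$); $\mathcal E_{0i}^{01}=(0,X_2^{1*},0,X_2^{2*})$ with $X_2^{1*}=(S_2^{in}-\lambda_2^{1i})/k_3$ and $X_2^{2*}$ a solution of $\mu_2(S_2^{in}-k_3x)=D_2(x-X_2^{1*})/x$ ($S_2^{in}>\lambda_2^{1i}$); $\mathcal E_{0i}^{11}=(0,X_2^{1*},X_1^{2*},X_2^{2*})$ with $X_2^{1*}=(S_2^{in}-\lambda_2^{1i})/k_3$, $X_1^{2*}=(S_1^{in}-\lambda_1^2)/k_1$, $X_2^{2*}$ a solution of $\mu_2(S_2^{in}+k_2X_1^{2*}-k_3x)=D_2(x-X_2^{1*})/x$ ($S_1^{in}>\lambda_1^2$, $S_2^{in}>\lambda_2^{1i}$); $\mathcal E_{1i}^{11}=(X_1^{1*},X_2^{1*},X_1^{2*},X_2^{2*})$ with $X_1^{1*}=(S_1^{in}-\lambda_1^1)/k_1$, $X_2^{1*}=k_2(S_1^{in}-F_{1i})/(k_1k_3)$, $X_1^{2*}$ solving $\mu_1(S_1^{in}-k_1x)=D_2(x-X_1^{1*})/x$,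 $X_2^{2*}$ a solution of $\mu_2(S_2^{in}+k_2X_1^{2*}-k_3x)=D_2(x-X_2^{1*})/x$ ($S_1^{in}>\max(\lambda_1^1,F_{1i})$). "Type" means the family of all steady states of the given form. *)

theory Defs
  imports "HOL-Analysis.Analysis" "HOL-Library.Extended_Real"
begin

record cparams =
  mu1 :: "real \<Rightarrow> real"
  mu2 :: "real \<Rightarrow> real"
  m1 :: real       \<comment> \<open>limit of mu1 at infinity\<close>
  S2m :: real      \<comment> \<open>maximiser of mu2\<close>
  k1 :: real
  k2 :: real
  k3 :: real
  D :: real
  r :: real
  S1in :: real
  S2in :: real

definition C1_nonneg :: "(real \<Rightarrow> real) \<Rightarrow> bool" where
  "C1_nonneg f \<longleftrightarrow> (\<exists>f'. continuous_on {0..} f' \<and>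
      (\<forall>x\<ge>0. (f has_real_derivative f' x) (at x within {0..})))"

definition rr :: "cparams \<Rightarrow> nat \<Rightarrow> real" where
  "rr P i = (if i = 1 then r P else 1 - r P)"

definition Dd :: "cparams \<Rightarrow> nat \<Rightarrow> real" where
  "Dd P i = D P / rr P i"

definition lam1 :: "cparams \<Rightarrow> nat \<Rightarrow> ereal" where
  "lam1 P i = (if D P \<ge> rr P i * m1 P then \<infinity>
     else ereal (THE S. 0 \<le> S \<and> mu1 P S = Dd P i))"

definition lam2 :: "cparams \<Rightarrow> nat \<Rightarrow> nat \<Rightarrow> ereal" where
  "lam2 P i j = (if D P > rr P i * mu2 P (S2m P) then \<infinity>
     else if j = 1 then ereal (THE S. 0 \<le> S \<and> S \<le> S2m P \<and> mu2 P S = Dd P i)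
     else ereal (THE S. S2m P \<le> S \<and> mu2 P S = Dd P i))"

definition FF :: "cparams \<Rightarrow> nat \<Rightarrow> nat \<Rightarrow> ereal" where
  "FF P i j = lam1 P i + ereal (k1 P / k2 P) * (lam2 P i j - ereal (S2in P))"

text \<open>Steady states (X_1^1, X_2^1, X_1^2, X_2^2) of the system, in the closed
  physical domain (nonnegative biomasses and substrate concentrations).\<close>
definition steady :: "cparams \<Rightarrow> real \<times> real \<times> real \<times> real \<Rightarrow> bool" where
  "steady P p = (case p of (x11, x21, x12, x22) \<Rightarrow>
      0 \<le> x11 \<and> 0 \<le> x21 \<and> 0 \<le> x12 \<and> 0 \<le> x22 \<and>
      0 \<le> S1in P - k1 P * x11 \<and> 0 \<le> S1in P - k1 P * x12 \<and>
      0 \<le> S2in P + k2 P * x11 - k3 P * x21 \<and> 0 \<le> S2in P + k2 P * x12 - k3 P * x22 \<and>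
      (mu1 P (S1in P - k1 P * x11) - Dd P 1) * x11 = 0 \<and>
      (mu2 P (S2in P + k2 P * x11 - k3 P * x21) - Dd P 1) * x21 = 0 \<and>
      Dd P 2 * (x11 - x12) + mu1 P (S1in P - k1 P * x12) * x12 = 0 \<and>
      Dd P 2 * (x21 - x22) + mu2 P (S2in P + k2 P * x12 - k3 P * x22) * x22 = 0)"

abbreviation L1 :: "cparams \<Rightarrow> nat \<Rightarrow> real" where "L1 P i \<equiv> real_of_ereal (lam1 P i)"
abbreviation L2 :: "cparams \<Rightarrow> nat \<Rightarrow> nat \<Rightarrow> real" where "L2 P i j \<equiv> real_of_ereal (lam2 P i j)"

definition X11s :: "cparams \<Rightarrow> real" where
  "X11s P = (S1in P - L1 P 1) / k1 P"

definition E00_00 :: "cparams \<Rightarrow> (real \<times> real \<times> real \<times> real) set" where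
  "E00_00 P = {p. steady P p \<and> p = (0, 0, 0, 0)}"

definition E00_0 :: "cparams \<Rightarrow> nat \<Rightarrow> (real \<times> real \<times> real \<times> real) set" where
  "E00_0 P i = {p. steady P p \<and> p = (0, 0, 0, (S2in P - L2 P 2 i) / k3 P)}"

definition E00_10 :: "cparams \<Rightarrow> (real \<times> real \<times> real \<times> real) set" where
  "E00_10 P = {p. steady P p \<and> p = (0, 0, (S1in P - L1 P 2) / k1 P, 0)}"

definition E00_1 :: "cparams \<Rightarrow> nat \<Rightarrow> (real \<times> real \<times> real \<times> real) set" where
  "E00_1 P i = {p. steady P p \<and> p = (0, 0, (S1in P - L1 P 2) / k1 P,
       k2 P * (S1in P - real_of_ereal (FF P 2 i)) / (k1 P * k3 P))}"

definition E10_10 :: "cparams \<Rightarrow> (real \<times> real \<times> real \<times> real) set" where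
  "E10_10 P = {p. steady P p \<and> (\<exists>x. p = (X11s P, 0, x, 0) \<and>
       mu1 P (S1in P - k1 P * x) = Dd P 2 * (x - X11s P) / x)}"

definition E10_1 :: "cparams \<Rightarrow> nat \<Rightarrow> (real \<times> real \<times> real \<times> real) set" where
  "E10_1 P i = {p. steady P p \<and> (\<exists>x. p = (X11s P, 0, x, (S2in P + k2 P * x - L2 P 2 i) / k3 P) \<and>
       mu1 P (S1in P - k1 P * x) = Dd P 2 * (x - X11s P) / x)}"

definition E0_01 :: "cparams \<Rightarrow> nat \<Rightarrow> (real \<times> real \<times> real \<times> real) set" where
  "E0_01 P i = {p. steady P p \<and> (\<exists>x. p = (0, (S2in P - L2 P 1 i) / k3 P, 0, x) \<and>
       mu2 P (S2in P - k3 P * x) = Dd P 2 * (x - (S2in P - L2 P 1 i) / k3 P) / x)}"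

definition E0_11 :: "cparams \<Rightarrow> nat \<Rightarrow> (real \<times> real \<times> real \<times> real) set" where
  "E0_11 P i = {p. steady P p \<and> (\<exists>x. p = (0, (S2in P - L2 P 1 i) / k3 P, (S1in P - L1 P 2) / k1 P, x) \<and>
       mu2 P (S2in P + k2 P * ((S1in P - L1 P 2) / k1 P) - k3 P * x)
         = Dd P 2 * (x - (S2in P - L2 P 1 i) / k3 P) / x)}"

definition E1_11 :: "cparams \<Rightarrow> nat \<Rightarrow> (real \<times> real \<times> real \<times> real) set" where
  "E1_11 P i = {p. steady P p \<and> (\<exists>y x.
       p = (X11s P, k2 P * (S1in P - real_of_ereal (FF P 1 i)) / (k1 P * k3 P), y, x) \<and>
       mu1 P (S1in P - k1 P * y) = Dd P 2 * (y - X11s P) / y \<and>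
       mu2 P (S2in P + k2 P * y - k3 P * x)
         = Dd P 2 * (x - k2 P * (S1in P - real_of_ereal (FF P 1 i)) / (k1 P * k3 P)) / x)}"

text \<open>x_2^m for a steady state whose X_1^2-component is c.\<close>
definition x2m :: "cparams \<Rightarrow> real \<Rightarrow> real" where
  "x2m P c = (S2in P + k2 P * c - S2m P) / k3 P"

text \<open>Genericity: every steady state (x11,x21,x12,x22) in T is a transversal
  (nondegenerate) zero, in x = x22, of the scalar equation
  mu2(S2in + k2 x12 - k3 x) - D2 (x - x21)/x = 0 defining X_2^{2*}.\<close>
definition nondeg :: "cparams \<Rightarrow> (real \<times> real \<times> real \<times> real) set \<Rightarrow> bool" where
  "nondeg P T \<longleftrightarrow> (\<forall>(x11, x21, x12, x22) \<in> T.
      deriv (\<lambda>x. mu2 P (S2in P + k2 P * x12 - k3 P * x) - Dd P 2 * (x - x21) / x) x22 \<noteq> 0)"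

end

theory Submission
  imports Defs
begin


lemma same_sign:
  fixes g :: "real \<Rightarrow> real"
  assumes "u \<le> v" "continuous_on {u..v} g" "\<forall>x. u \<le> x \<and> x \<le> v \<longrightarrow> g x \<noteq> 0"
  shows "g u > 0 \<longleftrightarrow> g v > 0"
proof -
  have "g u \<noteq> 0" "g v \<noteq> 0" using assms by auto
  show ?thesis
  proof (rule ccontr)
    assume "\<not> ?thesis"
    then have "(g u \<le> 0 \<and> 0 \<le> g v) \<or> (g v \<le> 0 \<and> 0 \<le> g u)" by auto
    then obtain x where "u \<le> x" "x \<le> v" "g x = 0"
      using IVT'[of g u 0 v] IVT2'[of g v 0 u] assms by blast
    then show False using assms by auto
  qed
qed

lemma sign_near:
  fixes g :: "real \<Rightarrow> real"
  assumes "(g has_real_derivative d) (at z)" "d \<noteq> 0" "g z = 0"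
  shows "\<exists>\<delta>>0. \<forall>h. 0 < h \<and> h < \<delta> \<longrightarrow> (g (z+h) > 0 \<longleftrightarrow> d > 0) \<and> (g (z-h) > 0 \<longleftrightarrow> d < 0)
           \<and> g (z+h) \<noteq> 0 \<and> g (z-h) \<noteq> 0"
proof (cases "d > 0")
  case True
  obtain d1 where d1: "d1 > 0" "\<forall>h>0. h < d1 \<longrightarrow> g z < g (z + h)"
    using DERIV_pos_inc_right[OF assms(1) True] by blast
  obtain d2 where d2: "d2 > 0" "\<forall>h>0. h < d2 \<longrightarrow> g (z - h) < g z"
    using DERIV_pos_inc_left[OF assms(1) True] by blast
  show ?thesis
    by (rule exI[of _ "min d1 d2"]) (use True d1 d2 assms(3) in auto)
next
  case False
  then have dn: "d < 0" using assms(2) by auto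
  obtain d1 where d1: "d1 > 0" "\<forall>h>0. h < d1 \<longrightarrow> g z > g (z + h)"
    using DERIV_neg_dec_right[OF assms(1) dn] by blast
  obtain d2 where d2: "d2 > 0" "\<forall>h>0. h < d2 \<longrightarrow> g z < g (z - h)"
    using DERIV_neg_dec_left[OF assms(1) dn] by blast
  show ?thesis
    by (rule exI[of _ "min d1 d2"]) (use dn d1 d2 assms(3) in auto)
qed

lemma zeros_finite:
  fixes g :: "real \<Rightarrow> real"
  assumes "continuous_on {a..b} g"
  and "\<forall>z. a \<le> z \<and> z \<le> b \<and> g z = 0 \<longrightarrow> (\<exists>d. (g has_real_derivative d) (at z) \<and> d \<noteq> 0)"
  shows "finite {z. a \<le> z \<and> z \<le> b \<and> g z = 0}"
proof (rule ccontr)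
  let ?Z = "{z. a \<le> z \<and> z \<le> b \<and> g z = 0}"
  assume inf: "infinite ?Z"
  have "?Z = {x \<in> {a..b}. g x = 0}" by auto
  then have "closed ?Z" using continuous_closed_preimage_constant[OF assms(1)] by simp
  moreover have "bounded ?Z" by (rule bounded_subset[of "{a..b}"]) auto
  ultimately have "compact ?Z" using compact_eq_bounded_closed by blast
  then obtain x where x: "x \<in> ?Z" "x islimpt ?Z"
    using inf unfolding compact_eq_Bolzano_Weierstrass by blast
  then obtain d where d: "(g has_real_derivative d) (at x)" "d \<noteq> 0" using assms(2) by blast
  obtain \<delta> where \<delta>: "\<delta> > 0" "\<forall>h. 0 < h \<and> h < \<delta> \<longrightarrow> g (x+h) \<noteq> 0 \<and> g (x-h) \<noteq> 0"
    using sign_near[OF d] x(1) by blast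
  obtain y where y: "y \<in> ?Z" "y \<noteq> x" "dist y x < \<delta>" using x(2) \<delta>(1) unfolding islimpt_approachable by blast
  show False
  proof (cases "y > x")
    case True
    then show False using \<delta>(2)[rule_format, of "y - x"] y by (auto simp: dist_real_def)
  next
    case False
    then show False using \<delta>(2)[rule_format, of "x - y"] y by (auto simp: dist_real_def)
  qed
qed




lemma odd_zeros_aux:
  fixes g :: "real \<Rightarrow> real"
  assumes gb: "g b < 0"
  and der: "\<forall>z. g z = 0 \<longrightarrow> (\<exists>d. (g has_real_derivative d) (at z) \<and> d \<noteq> 0)"
  shows "\<forall>a. a \<le> b \<longrightarrow> continuous_on {a..b} g \<longrightarrow> g a \<noteq> 0 \<longrightarrow>
     finite {z. a \<le> z \<and> z \<le> b \<and> g z = 0} \<longrightarrow> card {z. a \<le> z \<and> z \<le> b \<and> g z = 0} = n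
     \<longrightarrow> (odd n \<longleftrightarrow> g a > 0)"
proof (induction n)
  case 0
  show ?case
  proof (intro allI impI)
    fix a assume a: "a \<le> b" "continuous_on {a..b} g" "g a \<noteq> 0"
      "finite {z. a \<le> z \<and> z \<le> b \<and> g z = 0}" "card {z. a \<le> z \<and> z \<le> b \<and> g z = 0} = 0"
    then have "{z. a \<le> z \<and> z \<le> b \<and> g z = 0} = {}" by simp
    then have "g a > 0 \<longleftrightarrow> g b > 0" using same_sign[OF a(1) a(2)] by blast
    then show "odd (0::nat) \<longleftrightarrow> g a > 0" using gb by auto
  qed
next
  case (Suc m)
  show ?case
  proof (intro allI impI)
    fix a assume a: "a \<le> b" "continuous_on {a..b} g" "g a \<noteq> 0"
      "finite {z. a \<le> z \<and> z \<le> b \<and> g z = 0}" "card {z. a \<le> z \<and> z \<le> b \<and> g z = 0} = Suc m"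
    define Z where "Z = {z. a \<le> z \<and> z \<le> b \<and> g z = 0}"
    have Zne: "Z \<noteq> {}" using a(5) unfolding Z_def by (metis card.empty nat.distinct(1))
    define z where "z = Min Z"
    have finZ: "finite Z" using a(4) unfolding Z_def .
    have zZ: "z \<in> Z" unfolding z_def by (rule Min_in[OF finZ Zne])
    have zmin: "\<And>w. w \<in> Z \<Longrightarrow> z \<le> w" unfolding z_def using finZ by simp
    have az: "a < z" using zZ a(3) unfolding Z_def by (cases "a = z") auto
    have zb: "z < b" using zZ gb unfolding Z_def by (cases "b = z") auto
    obtain d where d: "(g has_real_derivative d) (at z)" "d \<noteq> 0" using der zZ unfolding Z_def by blast
    obtain \<delta> where \<delta>: "\<delta> > 0" "\<forall>h. 0 < h \<and> h < \<delta> \<longrightarrow> (g (z+h) > 0 \<longleftrightarrow> d > 0) \<and> (g (z-h) > 0 \<longleftrightarrow> d < 0)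
           \<and> g (z+h) \<noteq> 0 \<and> g (z-h) \<noteq> 0"
      using sign_near[OF d] zZ unfolding Z_def by blast
    define c where "c = z + min \<delta> (b - z) / 2"
    define e where "e = z - min \<delta> (z - a) / 2"
    have c1: "z < c" "c < b" "c < z + \<delta>" using \<delta>(1) zb unfolding c_def by (auto simp: min_def field_simps)
    have e1: "a < e" "e < z" "z - \<delta> < e" using \<delta>(1) az unfolding e_def by (auto simp: min_def field_simps)
    have gc: "g c > 0 \<longleftrightarrow> d > 0" "g c \<noteq> 0" using \<delta>(2)[rule_format, of "c - z"] c1 by auto
    have ge: "g e > 0 \<longleftrightarrow> d < 0" "g e \<noteq> 0" using \<delta>(2)[rule_format, of "z - e"] e1 by auto
    have "g a > 0 \<longleftrightarrow> g e > 0"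
    proof (rule same_sign[of a e g])
      show "a \<le> e" using e1 by simp
      show "continuous_on {a..e} g" using a(2) by (rule continuous_on_subset) (use e1 zb in auto)
      show "\<forall>x. a \<le> x \<and> x \<le> e \<longrightarrow> g x \<noteq> 0"
      proof (intro allI impI)
        fix x assume x: "a \<le> x \<and> x \<le> e"
        show "g x \<noteq> 0"
        proof
          assume "g x = 0"
          then have "x \<in> Z" using x e1 zb unfolding Z_def by auto
          then show False using zmin x e1 by fastforce
        qed
      qed
    qed
    then have ga: "g a > 0 \<longleftrightarrow> \<not> g c > 0" using gc ge d(2) by auto
    have Zc: "{w. c \<le> w \<and> w \<le> b \<and> g w = 0} = Z - {z}"
    proof (intro set_eqI iffI)
      fix w assume "w \<in> {w. c \<le> w \<and> w \<le> b \<and> g w = 0}"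
      then show "w \<in> Z - {z}" using c1 az unfolding Z_def by auto
    next
      fix w assume w: "w \<in> Z - {z}"
      then have "z < w" using zmin by force
      moreover have "\<not> (w < z + \<delta>)"
      proof
        assume "w < z + \<delta>"
        then have "g (z + (w - z)) \<noteq> 0" using \<delta>(2)[rule_format, of "w - z"] \<open>z < w\<close> by auto
        then show False using w unfolding Z_def by auto
      qed
      ultimately show "w \<in> {w. c \<le> w \<and> w \<le> b \<and> g w = 0}" using w c1 unfolding Z_def by auto
    qed
    have "finite {w. c \<le> w \<and> w \<le> b \<and> g w = 0}" using Zc a(4) unfolding Z_def by simp
    moreover have "card {w. c \<le> w \<and> w \<le> b \<and> g w = 0} = m"
      using Zc a(4,5) zZ unfolding Z_def by simp
    moreover have "continuous_on {c..b} g" using a(2) by (rule continuous_on_subset) (use c1 az in auto)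
    ultimately have "odd m \<longleftrightarrow> g c > 0" using Suc.IH c1 gc(2) by auto
    then show "odd (Suc m) \<longleftrightarrow> g a > 0" using ga by auto
  qed
qed

lemma odd_zeros:
  fixes g :: "real \<Rightarrow> real"
  assumes "a < b" "continuous_on {a..b} g" "g a > 0" "g b < 0"
  and der: "\<forall>z. a \<le> z \<and> z \<le> b \<and> g z = 0 \<longrightarrow> (\<exists>d. (g has_real_derivative d) (at z) \<and> d \<noteq> 0)"
  shows "finite {z. a \<le> z \<and> z \<le> b \<and> g z = 0} \<and> odd (card {z. a \<le> z \<and> z \<le> b \<and> g z = 0})"
proof -
  define g' where "g' = (\<lambda>x. if a \<le> x \<and> x \<le> b then g x else 1)"
  have eqs: "{z. a \<le> z \<and> z \<le> b \<and> g' z = 0} = {z. a \<le> z \<and> z \<le> b \<and> g z = 0}"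
    unfolding g'_def by auto
  have fin: "finite {z. a \<le> z \<and> z \<le> b \<and> g z = 0}" using zeros_finite[OF assms(2) der] .
  have cont': "continuous_on {a..b} g'" using assms(2) unfolding g'_def
    by (rule continuous_on_eq) auto
  have der': "\<forall>z. g' z = 0 \<longrightarrow> (\<exists>d. (g' has_real_derivative d) (at z) \<and> d \<noteq> 0)"
  proof (intro allI impI)
    fix z assume z: "g' z = 0"
    then have zin: "a \<le> z" "z \<le> b" "g z = 0" unfolding g'_def by (auto split: if_splits)
    have "z \<noteq> a" "z \<noteq> b" using zin assms(3,4) by auto
    then have zin2: "a < z" "z < b" using zin by auto
    obtain d where d: "(g has_real_derivative d) (at z)" "d \<noteq> 0" using der zin by blast
    have "(g' has_real_derivative d) (at z)"
    proof (rule has_field_derivative_transform_within_open[OF d(1), of "{a<..<b}"])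
      show "z \<in> {a<..<b}" using zin2 by auto
    qed (auto simp: g'_def)
    then show "\<exists>d. (g' has_real_derivative d) (at z) \<and> d \<noteq> 0" using d(2) by blast
  qed
  have gb': "g' b < 0" using assms(1,4) unfolding g'_def by auto
  have ga': "g' a \<noteq> 0" "g' a > 0" using assms(1,3) unfolding g'_def by auto
  have fin': "finite {z. a \<le> z \<and> z \<le> b \<and> g' z = 0}" using fin eqs by simp
  have "odd (card {z. a \<le> z \<and> z \<le> b \<and> g' z = 0}) \<longleftrightarrow> g' a > 0"
    using odd_zeros_aux[OF gb' der', rule_format, OF _ cont' ga'(1) fin' refl] assms(1) by simp
  then show ?thesis using fin eqs ga'(2) by simp
qed




lemma scalar_cont:
  fixes mu :: "real \<Rightarrow> real"
  assumes cont: "continuous_on {0..} mu" and X: "X > 0" and k: "k > 0"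
  shows "continuous_on {X..A/k} (\<lambda>x. mu (A - k*x) - D2*(x-X)/x)"
    and "continuous_on {X..A/k} (\<lambda>x. D2*(X - x) + mu (A - k*x)*x)"
proof -
  have c1: "continuous_on {X..A/k} (\<lambda>x. mu (A - k*x))"
  proof (rule continuous_on_compose2[OF cont])
    show "continuous_on {X..A/k} (\<lambda>x. A - k*x)" by (intro continuous_intros)
    show "(\<lambda>x. A - k*x) ` {X..A/k} \<subseteq> {0..}" using k by (auto simp: field_simps)
  qed
  show "continuous_on {X..A/k} (\<lambda>x. mu (A - k*x) - D2*(x-X)/x)"
    using X by (intro continuous_intros c1) auto
  show "continuous_on {X..A/k} (\<lambda>x. D2*(X - x) + mu (A - k*x)*x)"
    by (intro continuous_intros c1)
qed

lemma scalar_char: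
  fixes mu :: "real \<Rightarrow> real"
  assumes mu0: "mu 0 = 0" and pos: "\<forall>x>0. mu x > 0" and D2: "D2 > 0" and X: "X > 0" and k: "k > 0"
    and AX: "A - k*X > 0"
  shows "(0 \<le> x \<and> 0 \<le> A - k*x \<and> D2*(X - x) + mu (A - k*x)*x = 0) \<longleftrightarrow>
         (X < x \<and> x < A/k \<and> mu (A - k*x) = D2*(x-X)/x)"
proof
  assume h: "0 \<le> x \<and> 0 \<le> A - k*x \<and> D2*(X - x) + mu (A - k*x)*x = 0"
  have mnn: "mu (A - k*x) \<ge> 0"
  proof (cases "A - k*x = 0")
    case True then show ?thesis using mu0 by simp
  next
    case False then have "A - k*x > 0" using h by simp
    then show ?thesis using pos[rule_format, of "A - k*x"] by simp
  qed
  have "X < x"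
  proof (rule ccontr)
    assume "\<not> X < x"
    then have "x \<le> X" by simp
    show False
    proof (cases "x = X")
      case True
      then have "mu (A - k*x) > 0" using pos AX by auto
      then show False using h True X by simp
    next
      case False
      then have "D2*(X - x) > 0" using \<open>x \<le> X\<close> D2 by simp
      moreover have "mu (A - k*x)*x \<ge> 0" using mnn h by simp
      ultimately show False using h by linarith
    qed
  qed
  moreover have "x < A/k"
  proof (rule ccontr)
    assume "\<not> x < A/k"
    then have "A - k*x = 0" using h k by (auto simp: field_simps)
    then have "D2*(X - x) = 0" using h mu0 by simp
    then show False using \<open>X < x\<close> D2 by simp
  qed
  moreover have "mu (A - k*x) = D2*(x-X)/x" using h \<open>X < x\<close> X
    by (auto simp: field_simps)
  ultimately show "X < x \<and> x < A/k \<and> mu (A - k*x) = D2*(x-X)/x" by simp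
next
  assume h: "X < x \<and> x < A/k \<and> mu (A - k*x) = D2*(x-X)/x"
  then have "x > 0" using X by simp
  moreover have "0 \<le> A - k*x" using h k by (auto simp: field_simps)
  moreover have "D2*(X - x) + mu (A - k*x)*x = 0" using h \<open>x > 0\<close> by (simp add: field_simps)
  ultimately show "0 \<le> x \<and> 0 \<le> A - k*x \<and> D2*(X - x) + mu (A - k*x)*x = 0" by simp
qed

lemma scalar_ex:
  fixes mu :: "real \<Rightarrow> real"
  assumes cont: "continuous_on {0..} mu" and mu0: "mu 0 = 0" and pos: "\<forall>x>0. mu x > 0"
    and D2: "D2 > 0" and X: "X > 0" and k: "k > 0" and AX: "A - k*X > 0"
  shows "\<exists>x. X < x \<and> x < A/k \<and> mu (A - k*x) = D2*(x-X)/x"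
proof -
  let ?h = "\<lambda>x. D2*(X - x) + mu (A - k*x)*x"
  have XA: "X < A/k" using AX k by (simp add: field_simps)
  have "?h X > 0" using pos AX X by simp
  moreover have "D2*(X - A/k) < 0" using XA D2 by (intro mult_pos_neg) auto
  then have "?h (A/k) < 0" using mu0 k by simp
  ultimately obtain x where x: "X \<le> x" "x \<le> A/k" "?h x = 0"
    using IVT2'[of ?h "A/k" 0 X] XA scalar_cont(2)[OF cont X k] by force
  then have "0 \<le> x \<and> 0 \<le> A - k*x \<and> ?h x = 0" using X k by (auto simp: field_simps)
  then show ?thesis using scalar_char[OF mu0 pos D2 X k AX] by blast
qed

lemma scalar_uniq:
  fixes mu :: "real \<Rightarrow> real"
  assumes D2: "D2 > 0" and X: "X > 0" and k: "k > 0"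
    and mono: "\<forall>u v. 0 \<le> u \<and> u < v \<and> v \<le> A - k*X \<longrightarrow> mu u < mu v"
    and x: "X < x" "x < A/k" "mu (A - k*x) = D2*(x-X)/x"
    and y: "X < y" "y < A/k" "mu (A - k*y) = D2*(y-X)/y"
  shows "x = y"
proof (rule ccontr)
  assume "x \<noteq> y"
  have key: "False" if a: "X < a" "a < b" "b < A/k" "mu (A - k*a) = D2*(a-X)/a" "mu (A - k*b) = D2*(b-X)/b" for a b
  proof -
    have "0 \<le> A - k*b" "A - k*b < A - k*a" "A - k*a \<le> A - k*X" using a k X
      by (auto simp: field_simps)
    then have "mu (A - k*b) < mu (A - k*a)" using mono by blast
    moreover have "D2*(a-X)/a \<le> D2*(b-X)/b"
    proof -
      have "X/b \<le> X/a" using a X by (intro divide_left_mono) auto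
      then have "D2*(1 - X/a) \<le> D2*(1 - X/b)" using D2 by (intro mult_left_mono) auto
      moreover have "D2*(a-X)/a = D2*(1 - X/a)" "D2*(b-X)/b = D2*(1 - X/b)" using a X
        by (auto simp: field_simps)
      ultimately show ?thesis by simp
    qed
    ultimately show False using a by simp
  qed
  show False
  proof (cases "x < y")
    case True then show False using key[of x y] x y by simp
  next
    case False then have "y < x" using \<open>x \<noteq> y\<close> by simp
    then show False using key[of y x] x y by simp
  qed
qed

lemma scalar_odd:
  fixes mu :: "real \<Rightarrow> real"
  assumes cont: "continuous_on {0..} mu" and mu0: "mu 0 = 0" and pos: "\<forall>x>0. mu x > 0"
    and D2: "D2 > 0" and X: "X > 0" and k: "k > 0" and AX: "A - k*X > 0"
    and der: "\<forall>z. X < z \<and> z < A/k \<and> mu (A - k*z) - D2*(z-X)/z = 0 \<longrightarrow>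
       (\<exists>d. ((\<lambda>x. mu (A - k*x) - D2*(x-X)/x) has_real_derivative d) (at z) \<and> d \<noteq> 0)"
  shows "finite {x. X < x \<and> x < A/k \<and> mu (A - k*x) = D2*(x-X)/x} \<and>
         odd (card {x. X < x \<and> x < A/k \<and> mu (A - k*x) = D2*(x-X)/x})"
proof -
  let ?g = "\<lambda>x. mu (A - k*x) - D2*(x-X)/x"
  have XA: "X < A/k" using AX k by (simp add: field_simps)
  have gX: "?g X > 0" using pos AX X by simp
  have Ak: "A/k > 0" using XA X by linarith
  have "D2*(A/k - X) > 0" using XA D2 by simp
  have "D2*(A/k - X)/(A/k) > 0" by (rule divide_pos_pos[OF \<open>D2*(A/k - X) > 0\<close> Ak])
  then have gA: "?g (A/k) < 0" using mu0 k by simp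
  have eq: "{z. X \<le> z \<and> z \<le> A/k \<and> ?g z = 0} = {x. X < x \<and> x < A/k \<and> mu (A - k*x) = D2*(x-X)/x}"
  proof (intro set_eqI iffI)
    fix z assume "z \<in> {z. X \<le> z \<and> z \<le> A/k \<and> ?g z = 0}"
    then have z: "X \<le> z" "z \<le> A/k" "?g z = 0" by auto
    then have "z \<noteq> X" "z \<noteq> A/k" using gX gA by auto
    then show "z \<in> {x. X < x \<and> x < A/k \<and> mu (A - k*x) = D2*(x-X)/x}" using z by auto
  qed auto
  have "finite {z. X \<le> z \<and> z \<le> A/k \<and> ?g z = 0} \<and> odd (card {z. X \<le> z \<and> z \<le> A/k \<and> ?g z = 0})"
  proof (rule odd_zeros[OF XA scalar_cont(1)[OF cont X k] gX gA])
    show "\<forall>z. X \<le> z \<and> z \<le> A/k \<and> ?g z = 0 \<longrightarrow> (\<exists>d. (?g has_real_derivative d) (at z) \<and> d \<noteq> 0)"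
      using der eq by blast
  qed
  then show ?thesis using eq by simp
qed




lemma C1_cont: assumes "C1_nonneg f" shows "continuous_on {0..} f"
proof -
  obtain f' where f': "\<forall>x\<ge>0. (f has_real_derivative f' x) (at x within {0..})"
    using assms(1) unfolding C1_nonneg_def by blast
  show ?thesis by (rule DERIV_continuous_on[of _ _ f']) (use f' in simp)
qed

lemma C1_der: assumes "C1_nonneg f" "x > 0" shows "(f has_real_derivative deriv f x) (at x)"
proof -
  obtain f' where f': "\<forall>x\<ge>0. (f has_real_derivative f' x) (at x within {0..})"
    using assms(1) unfolding C1_nonneg_def by blast
  have fx: "(f has_real_derivative f' x) (at x within {0..})" using f' assms(2) by simp
  have "(f has_real_derivative f' x) (at x within {0<..})"
    by (rule DERIV_subset[OF fx]) auto
  then have d: "(f has_real_derivative f' x) (at x)"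
    using at_within_open[of x "{0<..}"] assms(2) by simp
  then show ?thesis using DERIV_imp_deriv[OF d] by simp
qed




locale chem =
  fixes P :: cparams
  assumes k1: "k1 P > 0" and k2: "k2 P > 0" and k3: "k3 P > 0"
    and D: "D P > 0" and r: "0 < r P" "r P < 1"
    and S1: "S1in P \<ge> 0" and S2: "S2in P \<ge> 0"
    and H1: "C1_nonneg (mu1 P)" "mu1 P 0 = 0" "(mu1 P \<longlongrightarrow> m1 P) at_top"
            "\<forall>x>0. deriv (mu1 P) x > 0"
    and H2: "C1_nonneg (mu2 P)" "mu2 P 0 = 0" "(mu2 P \<longlongrightarrow> 0) at_top" "S2m P > 0"
            "\<forall>x. 0 < x \<and> x < S2m P \<longrightarrow> deriv (mu2 P) x > 0"
            "\<forall>x. x > S2m P \<longrightarrow> deriv (mu2 P) x < 0"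
begin

lemma rr_pos: "rr P i > 0" using r unfolding rr_def by auto
lemma Dd_pos: "Dd P i > 0" using rr_pos D unfolding Dd_def by auto

lemma mu1_cont: "continuous_on {0..} (mu1 P)" using C1_cont[OF H1(1)] .
lemma mu2_cont: "continuous_on {0..} (mu2 P)" using C1_cont[OF H2(1)] .

lemma mu1_inc: assumes "0 \<le> u" "u < v" shows "mu1 P u < mu1 P v"
proof (rule DERIV_pos_imp_increasing_open[OF assms(2)])
  fix x assume "u < x" "x < v"
  then have "x > 0" using assms by simp
  then show "\<exists>y. DERIV (mu1 P) x :> y \<and> y > 0" using C1_der[OF H1(1)] H1(4) by blast
next
  show "continuous_on {u..v} (mu1 P)" using mu1_cont by (rule continuous_on_subset) (use assms in auto)
qed

lemma mu2_inc: assumes "0 \<le> u" "u < v" "v \<le> S2m P" shows "mu2 P u < mu2 P v"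
proof (rule DERIV_pos_imp_increasing_open[OF assms(2)])
  fix x assume "u < x" "x < v"
  then have "x > 0" "x < S2m P" using assms by auto
  then show "\<exists>y. DERIV (mu2 P) x :> y \<and> y > 0" using C1_der[OF H2(1)] H2(5) by blast
next
  show "continuous_on {u..v} (mu2 P)" using mu2_cont by (rule continuous_on_subset) (use assms in auto)
qed

lemma mu2_dec: assumes "S2m P \<le> u" "u < v" shows "mu2 P u > mu2 P v"
proof (rule DERIV_neg_imp_decreasing_open[OF assms(2)])
  fix x assume "u < x" "x < v"
  then have "x > 0" "x > S2m P" using assms H2(4) by auto
  then show "\<exists>y. DERIV (mu2 P) x :> y \<and> y < 0" using C1_der[OF H2(1)] H2(6) by blast
next
  show "continuous_on {u..v} (mu2 P)" using mu2_cont by (rule continuous_on_subset) (use assms H2(4) in auto)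
qed

lemma mu1_pos: "x > 0 \<Longrightarrow> mu1 P x > 0" using mu1_inc[of 0 x] H1(2) by simp

lemma mu1_lt: assumes "0 \<le> x" shows "mu1 P x < m1 P"
proof -
  have "mu1 P x < mu1 P (x+1)" using mu1_inc assms by simp
  moreover have "mu1 P (x+1) \<le> m1 P"
  proof (rule tendsto_lowerbound[OF H1(3)])
    show "\<forall>\<^sub>F y in at_top. mu1 P (x+1) \<le> mu1 P y"
      unfolding eventually_at_top_linorder
      by (rule exI[of _ "x+1"]) (use mu1_inc assms in \<open>auto simp: le_less\<close>)
  qed simp
  ultimately show ?thesis by simp
qed

lemma mu2_nonneg_tail: assumes "S2m P \<le> x" shows "mu2 P x \<ge> 0"
proof (rule tendsto_upperbound[OF H2(3)])
  show "\<forall>\<^sub>F y in at_top. mu2 P y \<le> mu2 P x"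
    unfolding eventually_at_top_linorder
  proof (rule exI[of _ "x"], intro allI impI)
    fix y assume "x \<le> y"
    then show "mu2 P y \<le> mu2 P x" using mu2_dec[of x y] assms by (cases "x = y") auto
  qed
qed simp

lemma mu2_pos: assumes "x > 0" shows "mu2 P x > 0"
proof (cases "x \<le> S2m P")
  case True then show ?thesis using mu2_inc[of 0 x] H2(2) assms by simp
next
  case False
  then have "mu2 P x > mu2 P (x+1)" using mu2_dec by simp
  moreover have "mu2 P (x+1) \<ge> 0" using mu2_nonneg_tail False by simp
  ultimately show ?thesis by simp
qed

end


context chem begin
lemma lam1_cases: "lam1 P i = \<infinity> \<or> lam1 P i = ereal (L1 P i)"
  unfolding lam1_def by auto

lemma lam2_cases: "lam2 P i j = \<infinity> \<or> lam2 P i j = ereal (L2 P i j)"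
  unfolding lam2_def by auto

lemma lam1_props:
  assumes "ereal s > lam1 P i"
  shows "lam1 P i = ereal (L1 P i) \<and> 0 < L1 P i \<and> mu1 P (L1 P i) = Dd P i \<and> L1 P i < s"
proof -
  have nd: "\<not> D P \<ge> rr P i * m1 P" using assms unfolding lam1_def by (auto split: if_splits)
  then have lt: "Dd P i < m1 P" using rr_pos[of i] unfolding Dd_def by (simp add: field_simps)
  have ex: "\<exists>!S. 0 \<le> S \<and> mu1 P S = Dd P i"
  proof -
    have "\<forall>\<^sub>F y in at_top. mu1 P y > Dd P i"
      using order_tendstoD(1)[OF H1(3) lt] .
    then obtain T where T: "\<forall>y\<ge>T. mu1 P y > Dd P i" unfolding eventually_at_top_linorder by blast
    define T' where "T' = max T 1"
    have "mu1 P T' > Dd P i" "T' \<ge> 0" using T unfolding T'_def by auto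
    moreover have "continuous_on {0..T'} (mu1 P)" using mu1_cont by (rule continuous_on_subset) auto
    ultimately obtain S where "0 \<le> S" "S \<le> T'" "mu1 P S = Dd P i"
      using IVT'[of "mu1 P" 0 "Dd P i" T'] H1(2) Dd_pos[of i] by force
    moreover have "S' = S" if "0 \<le> S'" "mu1 P S' = Dd P i" for S'
      using mu1_inc[of S S'] mu1_inc[of S' S] that \<open>0 \<le> S\<close> \<open>mu1 P S = Dd P i\<close>
      by (cases "S < S'"; cases "S' < S") auto
    ultimately show ?thesis by blast
  qed
  have l: "lam1 P i = ereal (THE S. 0 \<le> S \<and> mu1 P S = Dd P i)" using nd unfolding lam1_def by simp
  have t: "0 \<le> (THE S. 0 \<le> S \<and> mu1 P S = Dd P i) \<and> mu1 P (THE S. 0 \<le> S \<and> mu1 P S = Dd P i) = Dd P i"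
    using theI'[OF ex] .
  have "(THE S. 0 \<le> S \<and> mu1 P S = Dd P i) \<noteq> 0" using t H1(2) Dd_pos[of i] by auto
  then show ?thesis using l t assms by auto
qed

lemma lam2_props:
  assumes "ereal s > lam2 P i j"
  shows "lam2 P i j = ereal (L2 P i j) \<and> 0 < L2 P i j \<and> mu2 P (L2 P i j) = Dd P i \<and> L2 P i j < s
     \<and> (j = 1 \<longrightarrow> L2 P i j \<le> S2m P) \<and> (j \<noteq> 1 \<longrightarrow> S2m P \<le> L2 P i j)"
proof -
  have nd: "\<not> D P > rr P i * mu2 P (S2m P)" using assms unfolding lam2_def by (auto split: if_splits)
  then have le: "Dd P i \<le> mu2 P (S2m P)" using rr_pos[of i] unfolding Dd_def by (simp add: field_simps)
  show ?thesis
  proof (cases "j = 1")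
    case True
    have ex: "\<exists>!S. 0 \<le> S \<and> S \<le> S2m P \<and> mu2 P S = Dd P i"
    proof -
      have "continuous_on {0..S2m P} (mu2 P)" using mu2_cont by (rule continuous_on_subset) auto
      then obtain S where "0 \<le> S" "S \<le> S2m P" "mu2 P S = Dd P i"
        using IVT'[of "mu2 P" 0 "Dd P i" "S2m P"] H2(2,4) Dd_pos[of i] le by force
      moreover have "S' = S" if "0 \<le> S'" "S' \<le> S2m P" "mu2 P S' = Dd P i" for S'
        using mu2_inc[of S S'] mu2_inc[of S' S] that \<open>0 \<le> S\<close> \<open>S \<le> S2m P\<close> \<open>mu2 P S = Dd P i\<close>
        by (cases "S < S'"; cases "S' < S") auto
      ultimately show ?thesis by blast
    qed
    have l: "lam2 P i j = ereal (THE S. 0 \<le> S \<and> S \<le> S2m P \<and> mu2 P S = Dd P i)"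
      using nd True unfolding lam2_def by simp
    have t: "0 \<le> (THE S. 0 \<le> S \<and> S \<le> S2m P \<and> mu2 P S = Dd P i) \<and>
       (THE S. 0 \<le> S \<and> S \<le> S2m P \<and> mu2 P S = Dd P i) \<le> S2m P \<and>
       mu2 P (THE S. 0 \<le> S \<and> S \<le> S2m P \<and> mu2 P S = Dd P i) = Dd P i"
      using theI'[OF ex] .
    have "(THE S. 0 \<le> S \<and> S \<le> S2m P \<and> mu2 P S = Dd P i) \<noteq> 0" using t H2(2) Dd_pos[of i] by auto
    then show ?thesis using l t assms True by auto
  next
    case False
    have ex: "\<exists>!S. S2m P \<le> S \<and> mu2 P S = Dd P i"
    proof -
      have "\<forall>\<^sub>F y in at_top. mu2 P y < Dd P i"
        using order_tendstoD(2)[OF H2(3) Dd_pos] .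
      then obtain T where T: "\<forall>y\<ge>T. mu2 P y < Dd P i" unfolding eventually_at_top_linorder by blast
      define T' where "T' = max T (S2m P)"
      have "mu2 P T' < Dd P i" "T' \<ge> S2m P" using T unfolding T'_def by auto
      moreover have "continuous_on {S2m P..T'} (mu2 P)" using mu2_cont
        by (rule continuous_on_subset) (use H2(4) in auto)
      ultimately obtain S where "S2m P \<le> S" "S \<le> T'" "mu2 P S = Dd P i"
        using IVT2'[of "mu2 P" T' "Dd P i" "S2m P"] le by force
      moreover have "S' = S" if "S2m P \<le> S'" "mu2 P S' = Dd P i" for S'
        using mu2_dec[of S S'] mu2_dec[of S' S] that \<open>S2m P \<le> S\<close> \<open>mu2 P S = Dd P i\<close>
        by (cases "S < S'"; cases "S' < S") auto
      ultimately show ?thesis by blast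
    qed
    have l: "lam2 P i j = ereal (THE S. S2m P \<le> S \<and> mu2 P S = Dd P i)"
      using nd False unfolding lam2_def by simp
    have t: "S2m P \<le> (THE S. S2m P \<le> S \<and> mu2 P S = Dd P i) \<and>
       mu2 P (THE S. S2m P \<le> S \<and> mu2 P S = Dd P i) = Dd P i"
      using theI'[OF ex] .
    then show ?thesis using l t assms False H2(4) by auto
  qed
qed

lemma FF_props:
  assumes "ereal s > FF P i j"
  shows "lam1 P i = ereal (L1 P i) \<and> lam2 P i j = ereal (L2 P i j) \<and>
     real_of_ereal (FF P i j) = L1 P i + k1 P / k2 P * (L2 P i j - S2in P) \<and>
     L1 P i + k1 P / k2 P * (L2 P i j - S2in P) < s"
proof -
  have c: "k1 P / k2 P > 0" using k1 k2 by simp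
  have a: "lam1 P i \<noteq> \<infinity>"
  proof
    assume "lam1 P i = \<infinity>"
    then have "FF P i j = \<infinity>" unfolding FF_def using lam2_cases[of i j] c by auto
    then show False using assms by simp
  qed
  have b: "lam2 P i j \<noteq> \<infinity>"
  proof
    assume "lam2 P i j = \<infinity>"
    then have "FF P i j = \<infinity>" unfolding FF_def using lam1_cases[of i] c a by auto
    then show False using assms by simp
  qed
  have l1: "lam1 P i = ereal (L1 P i)" using a lam1_cases by blast
  have l2: "lam2 P i j = ereal (L2 P i j)" using b lam2_cases by blast
  have "FF P i j = ereal (L1 P i + k1 P / k2 P * (L2 P i j - S2in P))"
    unfolding FF_def by (subst l1, subst l2) simp
  then show ?thesis using l1 l2 assms by simp
qed

lemma g_diff:
  assumes "A - k3 P * z > 0" "z > 0"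
  shows "\<exists>d. ((\<lambda>x. mu2 P (A - k3 P * x) - Dd P 2 * (x - X) / x) has_real_derivative d) (at z)"
proof -
  have d1: "((\<lambda>x. mu2 P (A - k3 P * x)) has_real_derivative deriv (mu2 P) (A - k3 P * z) * (- k3 P)) (at z)"
    by (rule DERIV_chain2[of "mu2 P" _ "\<lambda>x. A - k3 P * x", OF C1_der[OF H2(1) assms(1)]]) (auto intro!: derivative_eq_intros)
  have d2: "((\<lambda>x. Dd P 2 * (x - X) / x) has_real_derivative
     (Dd P 2 * 1 * z - Dd P 2 * (z - X) * 1) / (z * z)) (at z)"
    using assms(2) by (auto intro!: derivative_eq_intros simp: power2_eq_square)
  show ?thesis using DERIV_diff[OF d1 d2] by blast
qed

end



definition sbase :: "cparams \<Rightarrow> real \<Rightarrow> real \<Rightarrow> real \<Rightarrow> bool" where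
  "sbase P a b c \<longleftrightarrow> 0 \<le> a \<and> 0 \<le> b \<and> 0 \<le> c \<and> 0 \<le> S1in P - k1 P * a \<and> 0 \<le> S1in P - k1 P * c \<and>
      0 \<le> S2in P + k2 P * a - k3 P * b \<and>
      (mu1 P (S1in P - k1 P * a) - Dd P 1) * a = 0 \<and>
      (mu2 P (S2in P + k2 P * a - k3 P * b) - Dd P 1) * b = 0 \<and>
      Dd P 2 * (a - c) + mu1 P (S1in P - k1 P * c) * c = 0"

lemma steady_split: "steady P (a,b,c,x) \<longleftrightarrow> sbase P a b c \<and> 0 \<le> x \<and> 0 \<le> S2in P + k2 P * c - k3 P * x \<and>
   Dd P 2 * (b - x) + mu2 P (S2in P + k2 P * c - k3 P * x) * x = 0"
  unfolding steady_def sbase_def by auto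

context chem begin

lemma last_props:
  assumes sb: "sbase P a b c" and b: "b > 0" and Ab: "S2in P + k2 P * c - k3 P * b > 0"
    and E: "E = {p. steady P p \<and> (\<exists>x. p = (a,b,c,x) \<and>
                  mu2 P (S2in P + k2 P * c - k3 P * x) = Dd P 2 * (x - b) / x)}"
  shows "(\<exists>p. p \<in> E) \<and> (S2in P + k2 P * c - k3 P * b \<le> S2m P \<longrightarrow> (\<exists>!p. p \<in> E))
     \<and> (nondeg P E \<longrightarrow> finite E \<and> odd (card E))"
proof -
  define A where "A = S2in P + k2 P * c"
  define Z where "Z = {x. b < x \<and> x < A / k3 P \<and> mu2 P (A - k3 P * x) = Dd P 2 * (x - b) / x}"
  have AX: "A - k3 P * b > 0" using Ab unfolding A_def .
  have mu2pos: "\<forall>x>0. mu2 P x > 0" using mu2_pos by blast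
  have char: "(0 \<le> x \<and> 0 \<le> A - k3 P * x \<and> Dd P 2 * (b - x) + mu2 P (A - k3 P * x) * x = 0) \<longleftrightarrow>
         (b < x \<and> x < A / k3 P \<and> mu2 P (A - k3 P * x) = Dd P 2 * (x - b) / x)" for x
    by (rule scalar_char[OF H2(2) mu2pos Dd_pos b k3 AX])
  have EZ: "E = (\<lambda>x. (a,b,c,x)) ` Z"
  proof (intro set_eqI iffI)
    fix p assume "p \<in> E"
    then obtain x where x: "p = (a,b,c,x)" "steady P (a,b,c,x)"
        "mu2 P (A - k3 P * x) = Dd P 2 * (x - b) / x"
      unfolding E A_def by auto
    then have "x \<in> Z" using char[of x] unfolding steady_split Z_def A_def by auto
    then show "p \<in> (\<lambda>x. (a,b,c,x)) ` Z" using x by auto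
  next
    fix p assume "p \<in> (\<lambda>x. (a,b,c,x)) ` Z"
    then obtain x where x: "p = (a,b,c,x)" "x \<in> Z" by auto
    then have "steady P (a,b,c,x)" "mu2 P (A - k3 P * x) = Dd P 2 * (x - b) / x"
      using char[of x] sb unfolding steady_split Z_def A_def by auto
    then show "p \<in> E" using x unfolding E A_def by auto
  qed
  have inj: "inj_on (\<lambda>x. (a,b,c,x)) Z" by (auto simp: inj_on_def)
  have ex: "\<exists>p. p \<in> E"
    using scalar_ex[OF mu2_cont H2(2) mu2pos Dd_pos b k3 AX] unfolding EZ Z_def by blast
  have un: "\<exists>!p. p \<in> E" if le: "A - k3 P * b \<le> S2m P"
  proof -
    have mono: "\<forall>u v. 0 \<le> u \<and> u < v \<and> v \<le> A - k3 P * b \<longrightarrow> mu2 P u < mu2 P v"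
      using mu2_inc le by auto
    have "x = y" if "x \<in> Z" "y \<in> Z" for x y
      using scalar_uniq[OF Dd_pos b k3 mono] that unfolding Z_def by blast
    then show ?thesis using ex unfolding EZ by blast
  qed
  have od: "finite E \<and> odd (card E)" if nd: "nondeg P E"
  proof -
    let ?g = "\<lambda>x. mu2 P (A - k3 P * x) - Dd P 2 * (x - b) / x"
    have der: "\<forall>z. b < z \<and> z < A / k3 P \<and> ?g z = 0 \<longrightarrow> (\<exists>d. (?g has_real_derivative d) (at z) \<and> d \<noteq> 0)"
    proof (intro allI impI)
      fix z assume z: "b < z \<and> z < A / k3 P \<and> ?g z = 0"
      then have "z \<in> Z" unfolding Z_def by auto
      then have "(a,b,c,z) \<in> E" unfolding EZ by auto
      then have dn: "deriv ?g z \<noteq> 0" using nd unfolding nondeg_def A_def by fastforce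
      have "A - k3 P * z > 0" "z > 0" using z b k3 by (auto simp: field_simps)
      then obtain d where d: "(?g has_real_derivative d) (at z)" using g_diff by blast
      then have "deriv ?g z = d" by (rule DERIV_imp_deriv)
      then show "\<exists>d. (?g has_real_derivative d) (at z) \<and> d \<noteq> 0" using d dn by auto
    qed
    have "finite Z \<and> odd (card Z)"
      using scalar_odd[OF mu2_cont H2(2) mu2pos Dd_pos b k3 AX der] unfolding Z_def .
    then show ?thesis unfolding EZ using card_image[OF inj] by auto
  qed
  show ?thesis using ex un od unfolding A_def by blast
qed

end



context chem begin

lemma E00_00_ok: "\<exists>!p. p \<in> E00_00 P"
proof -
  have "steady P (0,0,0,0)" unfolding steady_def using S1 S2 by simp
  then show ?thesis unfolding E00_00_def by auto
qed

lemma E00_0_ok: assumes "ereal (S2in P) > lam2 P 2 i" shows "\<exists>!p. p \<in> E00_0 P i"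
proof -
  define L where "L = L2 P 2 i"
  have L: "0 < L" "mu2 P L = Dd P 2" "L < S2in P" using lam2_props[OF assms] unfolding L_def by auto
  define x where "x = (S2in P - L) / k3 P"
  have x: "S2in P - k3 P * x = L" "0 \<le> x" using k3 L unfolding x_def by (auto simp: field_simps)
  have "steady P (0,0,0,x)" unfolding steady_def using S1 S2 x L by (simp add: algebra_simps)
  then show ?thesis unfolding E00_0_def x_def L_def by auto
qed

lemma E00_10_ok: assumes "ereal (S1in P) > lam1 P 2" shows "\<exists>!p. p \<in> E00_10 P"
proof -
  define L where "L = L1 P 2"
  have L: "0 < L" "mu1 P L = Dd P 2" "L < S1in P" using lam1_props[OF assms] unfolding L_def by auto
  define x where "x = (S1in P - L) / k1 P"
  have x: "S1in P - k1 P * x = L" "0 \<le> x" using k1 L unfolding x_def by (auto simp: field_simps)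
  have "0 \<le> S2in P + k2 P * x" using S2 k2 x by simp
  then have "steady P (0,0,x,0)" unfolding steady_def using S1 S2 x L by (simp add: algebra_simps)
  then show ?thesis unfolding E00_10_def x_def L_def by auto
qed

lemma E00_1_ok: assumes "ereal (S1in P) > max (lam1 P 2) (FF P 2 i)" shows "\<exists>!p. p \<in> E00_1 P i"
proof -
  have a1: "ereal (S1in P) > lam1 P 2" and a2: "ereal (S1in P) > FF P 2 i" using assms by auto
  define L where "L = L1 P 2"
  define M where "M = L2 P 2 i"
  have L: "0 < L" "mu1 P L = Dd P 2" "L < S1in P" using lam1_props[OF a1] unfolding L_def by auto
  have F: "lam2 P 2 i = ereal M" "real_of_ereal (FF P 2 i) = L + k1 P / k2 P * (M - S2in P)"
     "L + k1 P / k2 P * (M - S2in P) < S1in P" using FF_props[OF a2] unfolding L_def M_def by auto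
  have "lam2 P 2 i < ereal (M + 1)" using F(1) by simp
  then have M: "0 < M" "mu2 P M = Dd P 2" using lam2_props[where s="M + 1" and i=2 and j=i] unfolding M_def by auto
  define x where "x = (S1in P - L) / k1 P"
  define y where "y = k2 P * (S1in P - (L + k1 P / k2 P * (M - S2in P))) / (k1 P * k3 P)"
  have x: "S1in P - k1 P * x = L" "0 \<le> x" using k1 L unfolding x_def by (auto simp: field_simps)
  have y: "0 \<le> y" using F(3) k1 k2 k3 unfolding y_def by (auto intro!: divide_nonneg_pos)
  have xy: "S2in P + k2 P * x - k3 P * y = M" using k1 k2 k3 unfolding x_def y_def
    by (simp add: field_simps)
  have "0 \<le> S2in P + k2 P * x" using S2 k2 x by simp
  then have "steady P (0,0,x,y)" unfolding steady_def using S1 S2 x y L M xy by (simp add: algebra_simps)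
  then show ?thesis unfolding E00_1_def x_def y_def L_def F(2) by auto
qed

end



context chem begin

definition YY :: "real set" where
  "YY = {y. X11s P < y \<and> y < S1in P / k1 P \<and> mu1 P (S1in P - k1 P * y) = Dd P 2 * (y - X11s P) / y}"

lemma X_props: assumes "ereal (S1in P) > lam1 P 1"
  shows "X11s P > 0" "S1in P - k1 P * X11s P = L1 P 1" "mu1 P (L1 P 1) = Dd P 1" "L1 P 1 > 0"
  using lam1_props[OF assms] k1 unfolding X11s_def by (auto simp: field_simps)

lemma sbase_X:
  assumes a: "ereal (S1in P) > lam1 P 1"
    and b: "0 \<le> b" "0 \<le> S2in P + k2 P * X11s P - k3 P * b"
       "(mu2 P (S2in P + k2 P * X11s P - k3 P * b) - Dd P 1) * b = 0"
  shows "sbase P (X11s P) b y \<longleftrightarrow> y \<in> YY"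
proof -
  note X = X_props[OF a]
  have mu1pos: "\<forall>x>0. mu1 P x > 0" using mu1_pos by blast
  have AX: "S1in P - k1 P * X11s P > 0" using X by simp
  have char: "(0 \<le> y \<and> 0 \<le> S1in P - k1 P * y \<and> Dd P 2 * (X11s P - y) + mu1 P (S1in P - k1 P * y) * y = 0) \<longleftrightarrow>
         (X11s P < y \<and> y < S1in P / k1 P \<and> mu1 P (S1in P - k1 P * y) = Dd P 2 * (y - X11s P) / y)"
    by (rule scalar_char[OF H1(2) mu1pos Dd_pos X(1) k1 AX])
  show ?thesis unfolding sbase_def YY_def using char X b by auto
qed

lemma YY_ex1: assumes a: "ereal (S1in P) > lam1 P 1" shows "\<exists>!y. y \<in> YY"
proof -
  note X = X_props[OF a]
  have mu1pos: "\<forall>x>0. mu1 P x > 0" using mu1_pos by blast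
  have AX: "S1in P - k1 P * X11s P > 0" using X by simp
  have mono: "\<forall>u v. 0 \<le> u \<and> u < v \<and> v \<le> S1in P - k1 P * X11s P \<longrightarrow> mu1 P u < mu1 P v"
    using mu1_inc by auto
  have "x = y" if "x \<in> YY" "y \<in> YY" for x y
    using scalar_uniq[OF Dd_pos X(1) k1 mono] that unfolding YY_def by blast
  moreover have "\<exists>y. y \<in> YY"
    using scalar_ex[OF mu1_cont H1(2) mu1pos Dd_pos X(1) k1 AX] unfolding YY_def by blast
  ultimately show ?thesis by blast
qed

lemma E10_10_ok: assumes a: "ereal (S1in P) > lam1 P 1"
  shows "E10_10 P = (\<lambda>y. (X11s P, 0, y, 0)) ` YY" "\<exists>!p. p \<in> E10_10 P"
proof -
  note X = X_props[OF a]
  have sb: "sbase P (X11s P) 0 y \<longleftrightarrow> y \<in> YY" for y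
    by (rule sbase_X[OF a]) (use X k2 S2 in auto)
  have st: "steady P (X11s P, 0, y, 0) \<longleftrightarrow> y \<in> YY" for y
  proof -
    have "y \<in> YY \<Longrightarrow> 0 \<le> S2in P + k2 P * y" using X k2 S2 unfolding YY_def
      by (auto intro!: add_nonneg_nonneg)
    then show ?thesis unfolding steady_split sb by auto
  qed
  show E: "E10_10 P = (\<lambda>y. (X11s P, 0, y, 0)) ` YY"
    unfolding E10_10_def using st unfolding YY_def by auto
  show "\<exists>!p. p \<in> E10_10 P" unfolding E using YY_ex1[OF a] by blast
qed

lemma E10_1_ok: assumes a: "ereal (S1in P) > lam1 P 1"
  and h: "\<forall>(x11, x21, x12, x22) \<in> E10_10 P. ereal (S2in P + k2 P * x12) > lam2 P 2 i"
  shows "\<exists>!p. p \<in> E10_1 P i"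
proof -
  note X = X_props[OF a]
  have sb: "sbase P (X11s P) 0 y \<longleftrightarrow> y \<in> YY" for y
    by (rule sbase_X[OF a]) (use X k2 S2 in auto)
  obtain y0 where y0: "y0 \<in> YY" "\<And>y. y \<in> YY \<Longrightarrow> y = y0" using YY_ex1[OF a] by blast
  have "(X11s P, 0, y0, 0) \<in> E10_10 P" unfolding E10_10_ok(1)[OF a] using y0(1) by auto
  then have "ereal (S2in P + k2 P * y0) > lam2 P 2 i" using h by auto
  then have L: "0 < L2 P 2 i" "mu2 P (L2 P 2 i) = Dd P 2" "L2 P 2 i < S2in P + k2 P * y0"
    using lam2_props by blast+
  define x where "x = (S2in P + k2 P * y0 - L2 P 2 i) / k3 P"
  have x: "S2in P + k2 P * y0 - k3 P * x = L2 P 2 i" "0 \<le> x" using k3 L unfolding x_def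
    by (auto simp: field_simps)
  have "sbase P (X11s P) 0 y0" using sb y0(1) by blast
  moreover have "Dd P 2 * (0 - x) + mu2 P (S2in P + k2 P * y0 - k3 P * x) * x = 0"
    using x(1) L(2) by simp
  ultimately have "steady P (X11s P, 0, y0, x)" unfolding steady_split using x L by simp
  moreover have "mu1 P (S1in P - k1 P * y0) = Dd P 2 * (y0 - X11s P) / y0" using y0(1) unfolding YY_def by auto
  ultimately have ex: "(X11s P, 0, y0, x) \<in> E10_1 P i" unfolding E10_1_def x_def by auto
  have "p = (X11s P, 0, y0, x)" if pin: "p \<in> E10_1 P i" for p
  proof -
    obtain y where p: "p = (X11s P, 0, y, (S2in P + k2 P * y - L2 P 2 i) / k3 P)" "steady P p"
      using pin unfolding E10_1_def by auto
    then have "sbase P (X11s P) 0 y" using steady_split by simp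
    then have "y \<in> YY" using sb by blast
    then have "y = y0" by (rule y0(2))
    then show ?thesis using p unfolding x_def by auto
  qed
  then show ?thesis using ex by blast
qed

end



context chem begin

lemma E0_01_ok: assumes a: "ereal (S2in P) > lam2 P 1 i"
  shows "(\<exists>p. p \<in> E0_01 P i) \<and> (L2 P 1 i \<le> S2m P \<longrightarrow> (\<exists>!p. p \<in> E0_01 P i))
     \<and> (nondeg P (E0_01 P i) \<longrightarrow> finite (E0_01 P i) \<and> odd (card (E0_01 P i)))"
proof -
  have L: "0 < L2 P 1 i" "mu2 P (L2 P 1 i) = Dd P 1" "L2 P 1 i < S2in P" using lam2_props[OF a] by blast+
  define b where "b = (S2in P - L2 P 1 i) / k3 P"
  have b: "b > 0" "S2in P - k3 P * b = L2 P 1 i" using L k3 unfolding b_def by (auto simp: field_simps)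
  have sb: "sbase P 0 b 0" unfolding sbase_def using b L S1 by simp
  have Ab: "S2in P + k2 P * 0 - k3 P * b > 0" using b L by simp
  have E: "E0_01 P i = {p. steady P p \<and> (\<exists>x. p = (0,b,0,x) \<and>
                  mu2 P (S2in P + k2 P * 0 - k3 P * x) = Dd P 2 * (x - b) / x)}"
    unfolding E0_01_def b_def by simp
  show ?thesis using last_props[OF sb b(1) Ab E] b by simp
qed

lemma E0_11_ok: assumes a1: "ereal (S1in P) > lam1 P 2" and a2: "ereal (S2in P) > lam2 P 1 i"
  shows "((S2in P - L2 P 1 i) / k3 P > x2m P ((S1in P - L1 P 2) / k1 P) \<longrightarrow> (\<exists>!p. p \<in> E0_11 P i))
       \<and> ((S2in P - L2 P 1 i) / k3 P < x2m P ((S1in P - L1 P 2) / k1 P)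
            \<longrightarrow> (\<exists>p. p \<in> E0_11 P i) \<and>
                (nondeg P (E0_11 P i) \<longrightarrow> finite (E0_11 P i) \<and> odd (card (E0_11 P i))))"
proof -
  have L: "0 < L2 P 1 i" "mu2 P (L2 P 1 i) = Dd P 1" "L2 P 1 i < S2in P" using lam2_props[OF a2] by blast+
  have M: "0 < L1 P 2" "mu1 P (L1 P 2) = Dd P 2" "L1 P 2 < S1in P" using lam1_props[OF a1] by blast+
  define b where "b = (S2in P - L2 P 1 i) / k3 P"
  define c where "c = (S1in P - L1 P 2) / k1 P"
  have b: "b > 0" "S2in P - k3 P * b = L2 P 1 i" using L k3 unfolding b_def by (auto simp: field_simps)
  have c: "c > 0" "S1in P - k1 P * c = L1 P 2" using M k1 unfolding c_def by (auto simp: field_simps)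
  have "Dd P 2 * (0 - c) + mu1 P (S1in P - k1 P * c) * c = 0" using c M by simp
  then have sb: "sbase P 0 b c" unfolding sbase_def using b c L M S1 by simp
  have "k2 P * c > 0" using k2 c by simp
  then have Ab: "S2in P + k2 P * c - k3 P * b > 0" using b L by linarith
  have E: "E0_11 P i = {p. steady P p \<and> (\<exists>x. p = (0,b,c,x) \<and>
                  mu2 P (S2in P + k2 P * c - k3 P * x) = Dd P 2 * (x - b) / x)}"
    unfolding E0_11_def b_def c_def by simp
  note R = last_props[OF sb b(1) Ab E]
  have "b > x2m P c \<Longrightarrow> S2in P + k2 P * c - k3 P * b \<le> S2m P"
    unfolding x2m_def using k3 by (simp add: field_simps)
  then show ?thesis using R unfolding b_def[symmetric] c_def[symmetric] by blast
qed

lemma E1_11_ok: assumes a: "ereal (S1in P) > max (lam1 P 1) (FF P 1 i)"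
  shows "((\<forall>(x11, x21, x12, x22) \<in> E1_11 P i. x21 > x2m P x12) \<longrightarrow> (\<exists>!p. p \<in> E1_11 P i))
       \<and> ((\<forall>(x11, x21, x12, x22) \<in> E1_11 P i. x21 < x2m P x12)
            \<longrightarrow> (\<exists>p. p \<in> E1_11 P i) \<and>
                (nondeg P (E1_11 P i) \<longrightarrow> finite (E1_11 P i) \<and> odd (card (E1_11 P i))))"
proof -
  have a1: "ereal (S1in P) > lam1 P 1" and a2: "ereal (S1in P) > FF P 1 i" using a by auto
  note X = X_props[OF a1]
  have F: "lam2 P 1 i = ereal (L2 P 1 i)" "real_of_ereal (FF P 1 i) = L1 P 1 + k1 P / k2 P * (L2 P 1 i - S2in P)"
     "L1 P 1 + k1 P / k2 P * (L2 P 1 i - S2in P) < S1in P" using FF_props[OF a2] by auto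
  obtain l where l: "lam2 P 1 i = ereal l" using F(1) by blast
  have "lam2 P 1 i < ereal (L2 P 1 i + 1)" unfolding l by simp
  then have L: "0 < L2 P 1 i" "mu2 P (L2 P 1 i) = Dd P 1"
    using lam2_props[where s="L2 P 1 i + 1" and i=1 and j=i] by auto
  define b where "b = k2 P * (S1in P - real_of_ereal (FF P 1 i)) / (k1 P * k3 P)"
  have b: "b > 0" using F(2,3) k1 k2 k3 unfolding b_def by (auto intro!: divide_pos_pos)
  have bL: "S2in P + k2 P * X11s P - k3 P * b = L2 P 1 i" using k1 k2 k3 unfolding b_def F(2) X11s_def
    by (simp add: field_simps)
  have sb: "sbase P (X11s P) b y \<longleftrightarrow> y \<in> YY" for y
    by (rule sbase_X[OF a1]) (use b bL L in auto)
  obtain y0 where y0: "y0 \<in> YY" "\<And>y. y \<in> YY \<Longrightarrow> y = y0" using YY_ex1[OF a1] by blast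
  have y0X: "y0 > X11s P" using y0(1) unfolding YY_def by simp
  have E: "E1_11 P i = {p. steady P p \<and> (\<exists>x. p = (X11s P,b,y0,x) \<and>
                  mu2 P (S2in P + k2 P * y0 - k3 P * x) = Dd P 2 * (x - b) / x)}"
  proof (intro set_eqI iffI)
    fix p assume "p \<in> E1_11 P i"
    then obtain y x where p: "steady P p" "p = (X11s P, b, y, x)"
      "mu2 P (S2in P + k2 P * y - k3 P * x) = Dd P 2 * (x - b) / x"
      unfolding E1_11_def b_def by blast
    then have "sbase P (X11s P) b y" using steady_split by simp
    then have "y = y0" using sb y0(2) by blast
    then show "p \<in> {p. steady P p \<and> (\<exists>x. p = (X11s P,b,y0,x) \<and>
                  mu2 P (S2in P + k2 P * y0 - k3 P * x) = Dd P 2 * (x - b) / x)}" using p by blast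
  next
    fix p assume "p \<in> {p. steady P p \<and> (\<exists>x. p = (X11s P,b,y0,x) \<and>
                  mu2 P (S2in P + k2 P * y0 - k3 P * x) = Dd P 2 * (x - b) / x)}"
    then obtain x where p: "steady P p" "p = (X11s P, b, y0, x)"
      "mu2 P (S2in P + k2 P * y0 - k3 P * x) = Dd P 2 * (x - b) / x" by blast
    have "mu1 P (S1in P - k1 P * y0) = Dd P 2 * (y0 - X11s P) / y0" using y0(1) unfolding YY_def by blast
    then show "p \<in> E1_11 P i" using p unfolding E1_11_def b_def by blast
  qed
  have Ab: "S2in P + k2 P * y0 - k3 P * b > 0" using bL y0X L k2
    by (smt (verit) mult_strict_left_mono)
  note R = last_props[OF sb[THEN iffD2, OF y0(1)] b Ab E]
  obtain p0 where p0: "p0 \<in> E1_11 P i" using R by blast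
  then obtain x0 where x0: "p0 = (X11s P, b, y0, x0)" unfolding E by blast
  have "S2in P + k2 P * y0 - k3 P * b \<le> S2m P" if h: "\<forall>(x11, x21, x12, x22) \<in> E1_11 P i. x21 > x2m P x12"
  proof -
    have "b > x2m P y0" using h p0 x0 by auto
    then show ?thesis unfolding x2m_def using k3 by (simp add: field_simps)
  qed
  then show ?thesis using R by blast
qed

end

theorem proposition3p2:
  fixes P :: cparams
  assumes k1: "k1 P > 0" and k2: "k2 P > 0" and k3: "k3 P > 0"
    and D: "D P > 0" and r: "0 < r P" "r P < 1"
    and S1: "S1in P \<ge> 0" and S2: "S2in P \<ge> 0"
    and H1: "C1_nonneg (mu1 P)" "mu1 P 0 = 0" "(mu1 P \<longlongrightarrow> m1 P) at_top"
            "\<forall>x>0. deriv (mu1 P) x > 0"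
    and H2: "C1_nonneg (mu2 P)" "mu2 P 0 = 0" "(mu2 P \<longlongrightarrow> 0) at_top" "S2m P > 0"
            "\<forall>x. 0 < x \<and> x < S2m P \<longrightarrow> deriv (mu2 P) x > 0"
            "\<forall>x. x > S2m P \<longrightarrow> deriv (mu2 P) x < 0"
  shows
    "(\<exists>!p. p \<in> E00_00 P)
   \<and> (\<forall>i\<in>{1,2}. ereal (S2in P) > lam2 P 2 i \<longrightarrow> (\<exists>!p. p \<in> E00_0 P i))
   \<and> (ereal (S1in P) > lam1 P 2 \<longrightarrow> (\<exists>!p. p \<in> E00_10 P))
   \<and> (\<forall>i\<in>{1,2}. ereal (S1in P) > max (lam1 P 2) (FF P 2 i) \<longrightarrow> (\<exists>!p. p \<in> E00_1 P i))
   \<and> (ereal (S1in P) > lam1 P 1 \<longrightarrow> (\<exists>!p. p \<in> E10_10 P))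
   \<and> (\<forall>i\<in>{1,2}. ereal (S1in P) > lam1 P 1 \<and>
        (\<forall>(x11, x21, x12, x22) \<in> E10_10 P. ereal (S2in P + k2 P * x12) > lam2 P 2 i)
        \<longrightarrow> (\<exists>!p. p \<in> E10_1 P i))
   \<and> (ereal (S2in P) > lam2 P 1 1 \<longrightarrow> (\<exists>!p. p \<in> E0_01 P 1))
   \<and> (ereal (S2in P) > lam2 P 1 2 \<longrightarrow>
        (\<exists>p. p \<in> E0_01 P 2) \<and>
        (nondeg P (E0_01 P 2) \<longrightarrow> finite (E0_01 P 2) \<and> odd (card (E0_01 P 2))))
   \<and> (\<forall>i\<in>{1,2}. ereal (S1in P) > lam1 P 2 \<and> ereal (S2in P) > lam2 P 1 i \<longrightarrow>
        (((S2in P - L2 P 1 i) / k3 P > x2m P ((S1in P - L1 P 2) / k1 P)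
            \<longrightarrow> (\<exists>!p. p \<in> E0_11 P i))
       \<and> ((S2in P - L2 P 1 i) / k3 P < x2m P ((S1in P - L1 P 2) / k1 P)
            \<longrightarrow> (\<exists>p. p \<in> E0_11 P i) \<and>
                (nondeg P (E0_11 P i) \<longrightarrow> finite (E0_11 P i) \<and> odd (card (E0_11 P i))))))
   \<and> (\<forall>i\<in>{1,2}. ereal (S1in P) > max (lam1 P 1) (FF P 1 i) \<longrightarrow>
        (((\<forall>(x11, x21, x12, x22) \<in> E1_11 P i. x21 > x2m P x12)
            \<longrightarrow> (\<exists>!p. p \<in> E1_11 P i))
       \<and> ((\<forall>(x11, x21, x12, x22) \<in> E1_11 P i. x21 < x2m P x12)
            \<longrightarrow> (\<exists>p. p \<in> E1_11 P i) \<and>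
                (nondeg P (E1_11 P i) \<longrightarrow> finite (E1_11 P i) \<and> odd (card (E1_11 P i))))))"
  proof -
  interpret chem P using assms unfolding chem_def by auto
  have p1: "ereal (S2in P) > lam2 P 1 1 \<longrightarrow> (\<exists>!p. p \<in> E0_01 P 1)"
  proof
    assume a: "ereal (S2in P) > lam2 P 1 1"
    have "L2 P 1 1 \<le> S2m P" using lam2_props[OF a] by simp
    then show "\<exists>!p. p \<in> E0_01 P 1" using E0_01_ok[OF a] by blast
  qed
  have c2: "\<forall>i\<in>{1,2}. ereal (S2in P) > lam2 P 2 i \<longrightarrow> (\<exists>!p. p \<in> E00_0 P i)"
    using E00_0_ok by blast
  have c3: "ereal (S1in P) > lam1 P 2 \<longrightarrow> (\<exists>!p. p \<in> E00_10 P)" using E00_10_ok by blast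
  have c4: "\<forall>i\<in>{1,2}. ereal (S1in P) > max (lam1 P 2) (FF P 2 i) \<longrightarrow> (\<exists>!p. p \<in> E00_1 P i)"
    using E00_1_ok by blast
  have c5: "ereal (S1in P) > lam1 P 1 \<longrightarrow> (\<exists>!p. p \<in> E10_10 P)" using E10_10_ok(2) by blast
  have c6: "\<forall>i\<in>{1,2}. ereal (S1in P) > lam1 P 1 \<and>
        (\<forall>(x11, x21, x12, x22) \<in> E10_10 P. ereal (S2in P + k2 P * x12) > lam2 P 2 i)
        \<longrightarrow> (\<exists>!p. p \<in> E10_1 P i)" using E10_1_ok by blast
  have c8: "ereal (S2in P) > lam2 P 1 2 \<longrightarrow>
        (\<exists>p. p \<in> E0_01 P 2) \<and>
        (nondeg P (E0_01 P 2) \<longrightarrow> finite (E0_01 P 2) \<and> odd (card (E0_01 P 2)))"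
    using E0_01_ok by blast
  have c9: "\<forall>i\<in>{1,2}. ereal (S1in P) > lam1 P 2 \<and> ereal (S2in P) > lam2 P 1 i \<longrightarrow>
        (((S2in P - L2 P 1 i) / k3 P > x2m P ((S1in P - L1 P 2) / k1 P)
            \<longrightarrow> (\<exists>!p. p \<in> E0_11 P i))
       \<and> ((S2in P - L2 P 1 i) / k3 P < x2m P ((S1in P - L1 P 2) / k1 P)
            \<longrightarrow> (\<exists>p. p \<in> E0_11 P i) \<and>
                (nondeg P (E0_11 P i) \<longrightarrow> finite (E0_11 P i) \<and> odd (card (E0_11 P i)))))"
    using E0_11_ok by blast
  have c10: "\<forall>i\<in>{1,2}. ereal (S1in P) > max (lam1 P 1) (FF P 1 i) \<longrightarrow>
        (((\<forall>(x11, x21, x12, x22) \<in> E1_11 P i. x21 > x2m P x12)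
            \<longrightarrow> (\<exists>!p. p \<in> E1_11 P i))
       \<and> ((\<forall>(x11, x21, x12, x22) \<in> E1_11 P i. x21 < x2m P x12)
            \<longrightarrow> (\<exists>p. p \<in> E1_11 P i) \<and>
                (nondeg P (E1_11 P i) \<longrightarrow> finite (E1_11 P i) \<and> odd (card (E1_11 P i)))))"
    using E1_11_ok by blast
  show ?thesis by (intro conjI E00_00_ok c2 c3 c4 c5 c6 p1 c8 c9 c10)
qed

end
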